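(* Let $N$ be a positive integer and let $\lambda=(\lambda_1,\dots,\lambda_t)\in\overline{\mathcal{U}}_N$ with $\lambda_t$ odd. Then for every integer $x$ with $1\le x\le\lambda_t$, $$x\in\lambda\iff \lambda_t-x\notin\lambda.$$
   Context: A partition of $N$ into distinct parts is a sequence $\lambda=(\lambda_1<\dots<\lambda_t)$ of positive integers with sum $N$ and $t\ge 2$, identified with its set of parts. Missing parts: $\mathcal{M}_\lambda=\{1,\dots,\lambda_t\}\setminus\lambda$. $\lambda$ is refinable if there are two distinct missing parts $\mu<\mu'$ with $\mu+\mu'\in\lambda$, unrefinable otherwise; $\mathcal{U}_N$ is the set of unrefinable partitions of $N$. An element of $\mathcal{U}_N$ is maximal if its largest part is the maximum of the largest parts of elements of $\mathcal{U}_N$; $\widetilde{\mathcal{U}}_N$ is the set of these and $\overline{\mathcal{U}}_N=\{\lambda\in\widetilde{\mathcal{U}}_N:\#\mathcal{M}_\lambda=\lfloor\lambda_t/2\rfloor\}$. *)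

theory Defs
  imports Main
begin

text \<open>A partition of N into distinct parts, identified with its (finite) set of parts.\<close>
definition distinct_partition :: "nat \<Rightarrow> nat set \<Rightarrow> bool" where
  "distinct_partition N L \<longleftrightarrow> finite L \<and> 0 \<notin> L \<and> \<Sum>L = N \<and> card L \<ge> 2"

definition missing_parts :: "nat set \<Rightarrow> nat set" where
  "missing_parts L = {1..Max L} - L"

definition refinable :: "nat set \<Rightarrow> bool" where
  "refinable L \<longleftrightarrow> (\<exists>\<mu> \<mu>'. \<mu> \<in> missing_parts L \<and> \<mu>' \<in> missing_parts L \<and> \<mu> < \<mu>' \<and> \<mu> + \<mu>' \<in> L)"

definition unrefinable_set :: "nat \<Rightarrow> nat set set" where
  "unrefinable_set N = {L. distinct_partition N L \<and> \<not> refinable L}"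

definition maximal_unrefinable :: "nat \<Rightarrow> nat set set" where
  "maximal_unrefinable N = {L \<in> unrefinable_set N. \<forall>L' \<in> unrefinable_set N. Max L' \<le> Max L}"

definition overline_U :: "nat \<Rightarrow> nat set set" where
  "overline_U N = {L \<in> maximal_unrefinable N. card (missing_parts L) = Max L div 2}"

end

theory Submission
  imports Defs
begin

theorem lemma4p1:
  fixes N :: nat and L :: "nat set" and x :: nat
  assumes "N > 0" and "L \<in> overline_U N" and "odd (Max L)"
    and "1 \<le> x" and "x \<le> Max L"
  shows "x \<in> L \<longleftrightarrow> Max L - x \<notin> L"
proof -
  define m where "m = Max L"
  define k where "k = m div 2"
  define M where "M = missing_parts L"
  have fin: "finite L" and z: "0 \<notin> L" and c2: "card L \<ge> 2" and nr: "\<not> refinable L"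
    and cM: "card M = k"
    using assms(2) by (auto simp: overline_U_def maximal_unrefinable_def unrefinable_set_def
        distinct_partition_def M_def m_def k_def)
  have ne: "L \<noteq> {}" using c2 by auto
  have mL: "m \<in> L" using fin ne m_def by simp
  have om: "odd m" using assms(3) m_def by simp
  have Mdef: "\<And>y. y \<in> M \<longleftrightarrow> 1 \<le> y \<and> y \<le> m \<and> y \<notin> L"
    by (auto simp: M_def missing_parts_def m_def)
  have notboth: "\<And>a b. a \<in> M \<Longrightarrow> b \<in> M \<Longrightarrow> a + b = m \<Longrightarrow> False"
  proof -
    fix a b assume a: "a \<in> M" and b: "b \<in> M" and s: "a + b = m"
    have "a \<noteq> b" using s om by auto
    then show False
    proof (cases "a < b")
      case True thus False using nr a b s mL by (auto simp: refinable_def M_def)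
    next
      case False
      then have "b < a" using \<open>a \<noteq> b\<close> by simp
      then show False using nr a b s mL unfolding refinable_def M_def
        by (metis add.commute)
    qed
  qed
  define f where "f y = min y (m - y)" for y
  have finM: "finite M" by (auto simp: M_def missing_parts_def)
  have inj: "inj_on f M"
  proof (rule inj_onI)
    fix a b assume a: "a \<in> M" and b: "b \<in> M" and e: "f a = f b"
    have "a \<le> m" "b \<le> m" using a b Mdef by auto
    then have "a = b \<or> a + b = m" using e by (auto simp: f_def min_def split: if_splits)
    then show "a = b" using notboth a b by blast
  qed
  have sub: "f ` M \<subseteq> {1..k}"
  proof
    fix y assume "y \<in> f ` M"
    then obtain a where a: "a \<in> M" "y = f a" by auto
    have "1 \<le> a" "a \<le> m" "a \<noteq> m" using a Mdef mL by auto
    then show "y \<in> {1..k}" using a om by (auto simp: f_def k_def min_def)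
  qed
  have eq: "f ` M = {1..k}"
    using card_subset_eq[OF _ sub] card_image[OF inj] cM by simp
  show ?thesis
  proof (cases "x = m")
    case True then show ?thesis using mL z m_def by simp
  next
    case False
    have xm: "x < m" using False assms(5) m_def by simp
    have fx: "f x \<in> {1..k}" using xm assms(4) om by (auto simp: f_def k_def min_def)
    then obtain a where a: "a \<in> M" "f a = f x" using eq by (metis imageE)
    have "a \<le> m" using a Mdef by auto
    then have "a = x \<or> a = m - x" using a xm by (auto simp: f_def min_def split: if_splits)
    then have one: "x \<notin> L \<or> m - x \<notin> L" using a Mdef by auto
    have "\<not> (x \<notin> L \<and> m - x \<notin> L)"
    proof
      assume "x \<notin> L \<and> m - x \<notin> L"
      then have "x \<in> M" "m - x \<in> M" using Mdef xm assms(4) by auto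
      then show False using notboth xm by force
    qed
    then show ?thesis using one m_def by blast
  qed
qed

end
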